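(* Let $v_1\ge v_2\ge v_3\ge v_4>0$ and $p_{ij}=\frac{v_i}{v_i+v_j}$. For $i\in\{1,2,3,4\}$ and $j\in\{A,B,C\}$ let $T_{ij}$ be the probability that team $a_i$ wins the knockout tournament of type $j$. Then $T_{1A}\ge T_{1B}\ge T_{1C}$, $T_{2B}\ge T_{2A}\ge T_{2C}$, $T_{3C}\ge T_{3A}\ge T_{3B}$, and $T_{4C}\ge T_{4B}\ge T_{4A}$.
   Context: Four teams $a_1,\dots,a_4$ with weights $v_1,\dots,v_4$. In any game between $a_i$ and $a_j$, $a_i$ wins with probability $p_{ij}=v_i/(v_i+v_j)$, independently of other games. A knockout tournament consists of two first-round games whose winners meet in a final. Tournament $A$: first round $a_1$ vs $a_4$ and $a_2$ vs $a_3$. Tournament $B$: first round $a_1$ vs $a_3$ and $a_2$ vs $a_4$. Tournament $C$: first round $a_1$ vs $a_2$ and $a_3$ vs $a_4$. *)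

theory Defs
  imports Complex_Main
begin

definition p :: "(nat \<Rightarrow> real) \<Rightarrow> nat \<Rightarrow> nat \<Rightarrow> real" where
  "p v i j = v i / (v i + v j)"

text \<open>Knockout tournament with first-round games a vs b and c vs d, winners meet in the final.
  ko_win v a b c d = probability that team a wins the tournament (a plays b in round one;
  in the final a meets c with probability p c d, d with probability p d c).\<close>
definition ko_win :: "(nat \<Rightarrow> real) \<Rightarrow> nat \<Rightarrow> nat \<Rightarrow> nat \<Rightarrow> nat \<Rightarrow> real" where
  "ko_win v a b c d = p v a b * (p v c d * p v a c + p v d c * p v a d)"

text \<open>Tournament A: 1 vs 4, 2 vs 3. B: 1 vs 3, 2 vs 4. C: 1 vs 2, 3 vs 4.
  T_X v i = probability that team i wins tournament X.\<close>
definition TA :: "(nat \<Rightarrow> real) \<Rightarrow> nat \<Rightarrow> real" where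
  "TA v i = (if i = 1 then ko_win v 1 4 2 3 else if i = 4 then ko_win v 4 1 2 3
            else if i = 2 then ko_win v 2 3 1 4 else ko_win v 3 2 1 4)"
definition TB :: "(nat \<Rightarrow> real) \<Rightarrow> nat \<Rightarrow> real" where
  "TB v i = (if i = 1 then ko_win v 1 3 2 4 else if i = 3 then ko_win v 3 1 2 4
            else if i = 2 then ko_win v 2 4 1 3 else ko_win v 4 2 1 3)"
definition TC :: "(nat \<Rightarrow> real) \<Rightarrow> nat \<Rightarrow> real" where
  "TC v i = (if i = 1 then ko_win v 1 2 3 4 else if i = 2 then ko_win v 2 1 3 4
            else if i = 3 then ko_win v 3 4 1 2 else ko_win v 4 3 1 2)"

end

theory Submission
  imports Defs
begin

lemma k1:
  fixes A B C E :: real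
  assumes "A>0" "B>0" "C>0" "E>0"
  shows "A/(A+B) * (C/(C+E)*(A/(A+C)) + E/(E+C)*(A/(A+E))) = A*A*(C*(A+E)+E*(A+C)) / ((A+B)*(C+E)*(A+C)*(A+E))"
proof -
  have ne: "A+B \<noteq> 0" "C+E \<noteq> 0" "A+C \<noteq> 0" "A+E\<noteq>0" using assms by linarith+
  have "E+C = C+E" by simp
  then have "A/(A+B) * (C/(C+E)*(A/(A+C)) + E/(E+C)*(A/(A+E))) = A/(A+B) * (C/(C+E)*(A/(A+C)) + E/(C+E)*(A/(A+E)))" by simp
  also have "\<dots> = A*A*(C*(A+E)+E*(A+C)) / ((A+B)*(C+E)*(A+C)*(A+E))"
    using ne by (simp add: divide_simps) (simp add: algebra_simps)
  finally show ?thesis .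
qed

lemma ko_eq:
  assumes "v a > 0" "v b > 0" "v c > 0" "v e > 0"
  shows "ko_win v a b c e = v a * v a * (v c * (v a + v e) + v e * (v a + v c)) /
     ((v a + v b) * (v c + v e) * (v a + v c) * (v a + v e))"
  unfolding ko_win_def p_def by (rule k1[OF assms])

lemma cmp:
  fixes W S M1 M2 R1 R2 :: real
  assumes "0 < S" "0 < R1" "0 < R2" "M1 * R2 \<le> M2 * R1" "0 \<le> W"
  shows "W * M1 / (S * R1) \<le> W * M2 / (S * R2)"
proof -
  have "M1 / R1 \<le> M2 / R2" using assms by (simp add: divide_simps)
  then have "W * (M1 / R1) / S \<le> W * (M2 / R2) / S"
    using assms by (intro divide_right_mono mult_left_mono) auto
  then show ?thesis by (simp add: field_simps)
qed

lemma fle: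
  fixes a b c e :: real
  assumes "0 < b" "0 < e" "a * e \<le> c * b"
  shows "a / b \<le> c / e"
  using assms by (simp add: divide_simps)

lemma poly0:
  fixes x y z d :: real
  assumes x: "x \<ge> 0" and y: "y \<ge> 0" and z: "z \<ge> 0" and d: "d > 0"
  shows "((d+z+y)*((d+z+y+x)+d)+d*((d+z+y+x)+(d+z+y))) * ((d+z+y)+(d+z)) \<le> ((d+z+y)*((d+z+y+x)+(d+z))+(d+z)*((d+z+y+x)+(d+z+y))) * ((d+z+y)+d)"
proof -
  have N: "0 \<le> 2*z*d*d + 4*z*z*d + 2*z*z*z + 4*y*z*d + 4*y*z*z + 2*y*y*z"
    using x y z d by (intro add_nonneg_nonneg mult_nonneg_nonneg) auto
  have "((d+z+y)*((d+z+y+x)+(d+z))+(d+z)*((d+z+y+x)+(d+z+y))) * ((d+z+y)+d) = ((d+z+y)*((d+z+y+x)+d)+d*((d+z+y+x)+(d+z+y))) * ((d+z+y)+(d+z)) + (2*z*d*d + 4*z*z*d + 2*z*z*z + 4*y*z*d + 4*y*z*z + 2*y*y*z)"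
    by (simp add: algebra_simps)
  then show ?thesis using N by linarith
qed

lemma h0:
  fixes v :: "nat \<Rightarrow> real"
  assumes "v 1 \<ge> v 2" and "v 2 \<ge> v 3" and "v 3 \<ge> v 4" and "v 4 > 0"
  shows "ko_win v 1 3 2 4 \<le> ko_win v 1 4 2 3"
proof -
  define x where "x = v 1 - v 2"
  define y where "y = v 2 - v 3"
  define z where "z = v 3 - v 4"
  define d where "d = v 4"
  have x: "x \<ge> 0" and y: "y \<ge> 0" and z: "z \<ge> 0" and d: "d > 0"
    using assms by (auto simp: x_def y_def z_def d_def)
  have e: "v 1 = d+z+y+x" "v 2 = d+z+y" "v 3 = d+z" "v 4 = d"
    by (auto simp: x_def y_def z_def d_def)
  have pos: "v 1 > 0" "v 2 > 0" "v 3 > 0" "v 4 > 0" using assms by linarith+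
  have kp: "ko_win v 1 4 2 3 = v 1 * v 1 * (v 2 * (v 1 + v 3) + v 3 * (v 1 + v 2)) / (((v 1 + v 2)*(v 1 + v 3)*(v 1 + v 4)) * (v 2 + v 3))"
    unfolding ko_eq[OF pos(1,4,2,3)] by (simp add: mult_ac)
  have kq: "ko_win v 1 3 2 4 = v 1 * v 1 * (v 2 * (v 1 + v 4) + v 4 * (v 1 + v 2)) / (((v 1 + v 2)*(v 1 + v 3)*(v 1 + v 4)) * (v 2 + v 4))"
    unfolding ko_eq[OF pos(1,3,2,4)] by (simp add: mult_ac)
  have "v 1 * v 1 * (v 2 * (v 1 + v 4) + v 4 * (v 1 + v 2)) / (((v 1 + v 2)*(v 1 + v 3)*(v 1 + v 4)) * (v 2 + v 4)) \<le> v 1 * v 1 * (v 2 * (v 1 + v 3) + v 3 * (v 1 + v 2)) / (((v 1 + v 2)*(v 1 + v 3)*(v 1 + v 4)) * (v 2 + v 3))"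
  proof (rule cmp)
    show "(v 2 * (v 1 + v 4) + v 4 * (v 1 + v 2)) * (v 2 + v 3) \<le> (v 2 * (v 1 + v 3) + v 3 * (v 1 + v 2)) * (v 2 + v 4)"
      unfolding e by (rule poly0[OF x y z d])
  qed (use pos in \<open>auto intro!: mult_pos_pos add_pos_pos\<close>)
  then show ?thesis unfolding kp kq .
qed

lemma poly1:
  fixes x y z d :: real
  assumes x: "x \<ge> 0" and y: "y \<ge> 0" and z: "z \<ge> 0" and d: "d > 0"
  shows "((d+z)*((d+z+y+x)+d)+d*((d+z+y+x)+(d+z))) * ((d+z+y)+d) \<le> ((d+z+y)*((d+z+y+x)+d)+d*((d+z+y+x)+(d+z+y))) * ((d+z)+d)"
proof -
  have N: "0 \<le> 2*y*d*d"
    using x y z d by (intro add_nonneg_nonneg mult_nonneg_nonneg) auto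
  have "((d+z+y)*((d+z+y+x)+d)+d*((d+z+y+x)+(d+z+y))) * ((d+z)+d) = ((d+z)*((d+z+y+x)+d)+d*((d+z+y+x)+(d+z))) * ((d+z+y)+d) + (2*y*d*d)"
    by (simp add: algebra_simps)
  then show ?thesis using N by linarith
qed

lemma h1:
  fixes v :: "nat \<Rightarrow> real"
  assumes "v 1 \<ge> v 2" and "v 2 \<ge> v 3" and "v 3 \<ge> v 4" and "v 4 > 0"
  shows "ko_win v 1 2 3 4 \<le> ko_win v 1 3 2 4"
proof -
  define x where "x = v 1 - v 2"
  define y where "y = v 2 - v 3"
  define z where "z = v 3 - v 4"
  define d where "d = v 4"
  have x: "x \<ge> 0" and y: "y \<ge> 0" and z: "z \<ge> 0" and d: "d > 0"
    using assms by (auto simp: x_def y_def z_def d_def)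
  have e: "v 1 = d+z+y+x" "v 2 = d+z+y" "v 3 = d+z" "v 4 = d"
    by (auto simp: x_def y_def z_def d_def)
  have pos: "v 1 > 0" "v 2 > 0" "v 3 > 0" "v 4 > 0" using assms by linarith+
  have kp: "ko_win v 1 3 2 4 = v 1 * v 1 * (v 2 * (v 1 + v 4) + v 4 * (v 1 + v 2)) / (((v 1 + v 2)*(v 1 + v 3)*(v 1 + v 4)) * (v 2 + v 4))"
    unfolding ko_eq[OF pos(1,3,2,4)] by (simp add: mult_ac)
  have kq: "ko_win v 1 2 3 4 = v 1 * v 1 * (v 3 * (v 1 + v 4) + v 4 * (v 1 + v 3)) / (((v 1 + v 2)*(v 1 + v 3)*(v 1 + v 4)) * (v 3 + v 4))"
    unfolding ko_eq[OF pos(1,2,3,4)] by (simp add: mult_ac)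
  have "v 1 * v 1 * (v 3 * (v 1 + v 4) + v 4 * (v 1 + v 3)) / (((v 1 + v 2)*(v 1 + v 3)*(v 1 + v 4)) * (v 3 + v 4)) \<le> v 1 * v 1 * (v 2 * (v 1 + v 4) + v 4 * (v 1 + v 2)) / (((v 1 + v 2)*(v 1 + v 3)*(v 1 + v 4)) * (v 2 + v 4))"
  proof (rule cmp)
    show "(v 3 * (v 1 + v 4) + v 4 * (v 1 + v 3)) * (v 2 + v 4) \<le> (v 2 * (v 1 + v 4) + v 4 * (v 1 + v 2)) * (v 3 + v 4)"
      unfolding e by (rule poly1[OF x y z d])
  qed (use pos in \<open>auto intro!: mult_pos_pos add_pos_pos\<close>)
  then show ?thesis unfolding kp kq .
qed

lemma poly2:
  fixes x y z d :: real
  assumes x: "x \<ge> 0" and y: "y \<ge> 0" and z: "z \<ge> 0" and d: "d > 0"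
  shows "((d+z+y+x)*((d+z+y)+d)+d*((d+z+y)+(d+z+y+x))) * ((d+z+y+x)+(d+z)) \<le> ((d+z+y+x)*((d+z+y)+(d+z))+(d+z)*((d+z+y)+(d+z+y+x))) * ((d+z+y+x)+d)"
proof -
  have N: "0 \<le> 2*z*d*d + 4*z*z*d + 2*z*z*z + 4*y*z*d + 4*y*z*z + 2*y*y*z + 4*x*z*d + 4*x*z*z + 4*x*y*z + 2*x*x*z"
    using x y z d by (intro add_nonneg_nonneg mult_nonneg_nonneg) auto
  have "((d+z+y+x)*((d+z+y)+(d+z))+(d+z)*((d+z+y)+(d+z+y+x))) * ((d+z+y+x)+d) = ((d+z+y+x)*((d+z+y)+d)+d*((d+z+y)+(d+z+y+x))) * ((d+z+y+x)+(d+z)) + (2*z*d*d + 4*z*z*d + 2*z*z*z + 4*y*z*d + 4*y*z*z + 2*y*y*z + 4*x*z*d + 4*x*z*z + 4*x*y*z + 2*x*x*z)"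
    by (simp add: algebra_simps)
  then show ?thesis using N by linarith
qed

lemma h2:
  fixes v :: "nat \<Rightarrow> real"
  assumes "v 1 \<ge> v 2" and "v 2 \<ge> v 3" and "v 3 \<ge> v 4" and "v 4 > 0"
  shows "ko_win v 2 3 1 4 \<le> ko_win v 2 4 1 3"
proof -
  define x where "x = v 1 - v 2"
  define y where "y = v 2 - v 3"
  define z where "z = v 3 - v 4"
  define d where "d = v 4"
  have x: "x \<ge> 0" and y: "y \<ge> 0" and z: "z \<ge> 0" and d: "d > 0"
    using assms by (auto simp: x_def y_def z_def d_def)
  have e: "v 1 = d+z+y+x" "v 2 = d+z+y" "v 3 = d+z" "v 4 = d"
    by (auto simp: x_def y_def z_def d_def)
  have pos: "v 1 > 0" "v 2 > 0" "v 3 > 0" "v 4 > 0" using assms by linarith+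
  have kp: "ko_win v 2 4 1 3 = v 2 * v 2 * (v 1 * (v 2 + v 3) + v 3 * (v 2 + v 1)) / (((v 2 + v 1)*(v 2 + v 3)*(v 2 + v 4)) * (v 1 + v 3))"
    unfolding ko_eq[OF pos(2,4,1,3)] by (simp add: mult_ac)
  have kq: "ko_win v 2 3 1 4 = v 2 * v 2 * (v 1 * (v 2 + v 4) + v 4 * (v 2 + v 1)) / (((v 2 + v 1)*(v 2 + v 3)*(v 2 + v 4)) * (v 1 + v 4))"
    unfolding ko_eq[OF pos(2,3,1,4)] by (simp add: mult_ac)
  have "v 2 * v 2 * (v 1 * (v 2 + v 4) + v 4 * (v 2 + v 1)) / (((v 2 + v 1)*(v 2 + v 3)*(v 2 + v 4)) * (v 1 + v 4)) \<le> v 2 * v 2 * (v 1 * (v 2 + v 3) + v 3 * (v 2 + v 1)) / (((v 2 + v 1)*(v 2 + v 3)*(v 2 + v 4)) * (v 1 + v 3))"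
  proof (rule cmp)
    show "(v 1 * (v 2 + v 4) + v 4 * (v 2 + v 1)) * (v 1 + v 3) \<le> (v 1 * (v 2 + v 3) + v 3 * (v 2 + v 1)) * (v 1 + v 4)"
      unfolding e by (rule poly2[OF x y z d])
  qed (use pos in \<open>auto intro!: mult_pos_pos add_pos_pos\<close>)
  then show ?thesis unfolding kp kq .
qed

lemma poly3:
  fixes x y z d :: real
  assumes x: "x \<ge> 0" and y: "y \<ge> 0" and z: "z \<ge> 0" and d: "d > 0"
  shows "((d+z)*((d+z+y)+d)+d*((d+z+y)+(d+z))) * ((d+z+y+x)+d) \<le> ((d+z+y+x)*((d+z+y)+d)+d*((d+z+y)+(d+z+y+x))) * ((d+z)+d)"
proof -
  have N: "0 \<le> 2*y*d*d + 2*x*d*d"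
    using x y z d by (intro add_nonneg_nonneg mult_nonneg_nonneg) auto
  have "((d+z+y+x)*((d+z+y)+d)+d*((d+z+y)+(d+z+y+x))) * ((d+z)+d) = ((d+z)*((d+z+y)+d)+d*((d+z+y)+(d+z))) * ((d+z+y+x)+d) + (2*y*d*d + 2*x*d*d)"
    by (simp add: algebra_simps)
  then show ?thesis using N by linarith
qed

lemma h3:
  fixes v :: "nat \<Rightarrow> real"
  assumes "v 1 \<ge> v 2" and "v 2 \<ge> v 3" and "v 3 \<ge> v 4" and "v 4 > 0"
  shows "ko_win v 2 1 3 4 \<le> ko_win v 2 3 1 4"
proof -
  define x where "x = v 1 - v 2"
  define y where "y = v 2 - v 3"
  define z where "z = v 3 - v 4"
  define d where "d = v 4"
  have x: "x \<ge> 0" and y: "y \<ge> 0" and z: "z \<ge> 0" and d: "d > 0"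
    using assms by (auto simp: x_def y_def z_def d_def)
  have e: "v 1 = d+z+y+x" "v 2 = d+z+y" "v 3 = d+z" "v 4 = d"
    by (auto simp: x_def y_def z_def d_def)
  have pos: "v 1 > 0" "v 2 > 0" "v 3 > 0" "v 4 > 0" using assms by linarith+
  have kp: "ko_win v 2 3 1 4 = v 2 * v 2 * (v 1 * (v 2 + v 4) + v 4 * (v 2 + v 1)) / (((v 2 + v 1)*(v 2 + v 3)*(v 2 + v 4)) * (v 1 + v 4))"
    unfolding ko_eq[OF pos(2,3,1,4)] by (simp add: mult_ac)
  have kq: "ko_win v 2 1 3 4 = v 2 * v 2 * (v 3 * (v 2 + v 4) + v 4 * (v 2 + v 3)) / (((v 2 + v 1)*(v 2 + v 3)*(v 2 + v 4)) * (v 3 + v 4))"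
    unfolding ko_eq[OF pos(2,1,3,4)] by (simp add: mult_ac)
  have "v 2 * v 2 * (v 3 * (v 2 + v 4) + v 4 * (v 2 + v 3)) / (((v 2 + v 1)*(v 2 + v 3)*(v 2 + v 4)) * (v 3 + v 4)) \<le> v 2 * v 2 * (v 1 * (v 2 + v 4) + v 4 * (v 2 + v 1)) / (((v 2 + v 1)*(v 2 + v 3)*(v 2 + v 4)) * (v 1 + v 4))"
  proof (rule cmp)
    show "(v 3 * (v 2 + v 4) + v 4 * (v 2 + v 3)) * (v 1 + v 4) \<le> (v 1 * (v 2 + v 4) + v 4 * (v 2 + v 1)) * (v 3 + v 4)"
      unfolding e by (rule poly3[OF x y z d])
  qed (use pos in \<open>auto intro!: mult_pos_pos add_pos_pos\<close>)
  then show ?thesis unfolding kp kq .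
qed

lemma poly4:
  fixes x y z d :: real
  assumes x: "x \<ge> 0" and y: "y \<ge> 0" and z: "z \<ge> 0" and d: "d > 0"
  shows "((d+z+y+x)*((d+z)+d)+d*((d+z)+(d+z+y+x))) * ((d+z+y+x)+(d+z+y)) \<le> ((d+z+y+x)*((d+z)+(d+z+y))+(d+z+y)*((d+z)+(d+z+y+x))) * ((d+z+y+x)+d)"
proof -
  have N: "0 \<le> 2*z*d*d + 4*z*z*d + 2*z*z*z + 2*y*d*d + 8*y*z*d + 6*y*z*z + 4*y*y*d + 6*y*y*z + 2*y*y*y + 4*x*z*d + 4*x*z*z + 4*x*y*d + 8*x*y*z + 4*x*y*y + 2*x*x*z + 2*x*x*y"
    using x y z d by (intro add_nonneg_nonneg mult_nonneg_nonneg) auto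
  have "((d+z+y+x)*((d+z)+(d+z+y))+(d+z+y)*((d+z)+(d+z+y+x))) * ((d+z+y+x)+d) = ((d+z+y+x)*((d+z)+d)+d*((d+z)+(d+z+y+x))) * ((d+z+y+x)+(d+z+y)) + (2*z*d*d + 4*z*z*d + 2*z*z*z + 2*y*d*d + 8*y*z*d + 6*y*z*z + 4*y*y*d + 6*y*y*z + 2*y*y*y + 4*x*z*d + 4*x*z*z + 4*x*y*d + 8*x*y*z + 4*x*y*y + 2*x*x*z + 2*x*x*y)"
    by (simp add: algebra_simps)
  then show ?thesis using N by linarith
qed

lemma h4:
  fixes v :: "nat \<Rightarrow> real"
  assumes "v 1 \<ge> v 2" and "v 2 \<ge> v 3" and "v 3 \<ge> v 4" and "v 4 > 0"
  shows "ko_win v 3 2 1 4 \<le> ko_win v 3 4 1 2"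
proof -
  define x where "x = v 1 - v 2"
  define y where "y = v 2 - v 3"
  define z where "z = v 3 - v 4"
  define d where "d = v 4"
  have x: "x \<ge> 0" and y: "y \<ge> 0" and z: "z \<ge> 0" and d: "d > 0"
    using assms by (auto simp: x_def y_def z_def d_def)
  have e: "v 1 = d+z+y+x" "v 2 = d+z+y" "v 3 = d+z" "v 4 = d"
    by (auto simp: x_def y_def z_def d_def)
  have pos: "v 1 > 0" "v 2 > 0" "v 3 > 0" "v 4 > 0" using assms by linarith+
  have kp: "ko_win v 3 4 1 2 = v 3 * v 3 * (v 1 * (v 3 + v 2) + v 2 * (v 3 + v 1)) / (((v 3 + v 1)*(v 3 + v 2)*(v 3 + v 4)) * (v 1 + v 2))"
    unfolding ko_eq[OF pos(3,4,1,2)] by (simp add: mult_ac)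
  have kq: "ko_win v 3 2 1 4 = v 3 * v 3 * (v 1 * (v 3 + v 4) + v 4 * (v 3 + v 1)) / (((v 3 + v 1)*(v 3 + v 2)*(v 3 + v 4)) * (v 1 + v 4))"
    unfolding ko_eq[OF pos(3,2,1,4)] by (simp add: mult_ac)
  have "v 3 * v 3 * (v 1 * (v 3 + v 4) + v 4 * (v 3 + v 1)) / (((v 3 + v 1)*(v 3 + v 2)*(v 3 + v 4)) * (v 1 + v 4)) \<le> v 3 * v 3 * (v 1 * (v 3 + v 2) + v 2 * (v 3 + v 1)) / (((v 3 + v 1)*(v 3 + v 2)*(v 3 + v 4)) * (v 1 + v 2))"
  proof (rule cmp)
    show "(v 1 * (v 3 + v 4) + v 4 * (v 3 + v 1)) * (v 1 + v 2) \<le> (v 1 * (v 3 + v 2) + v 2 * (v 3 + v 1)) * (v 1 + v 4)"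
      unfolding e by (rule poly4[OF x y z d])
  qed (use pos in \<open>auto intro!: mult_pos_pos add_pos_pos\<close>)
  then show ?thesis unfolding kp kq .
qed

lemma poly5:
  fixes x y z d :: real
  assumes x: "x \<ge> 0" and y: "y \<ge> 0" and z: "z \<ge> 0" and d: "d > 0"
  shows "((d+z+y)*((d+z)+d)+d*((d+z)+(d+z+y))) * ((d+z+y+x)+d) \<le> ((d+z+y+x)*((d+z)+d)+d*((d+z)+(d+z+y+x))) * ((d+z+y)+d)"
proof -
  have N: "0 \<le> 2*x*d*d"
    using x y z d by (intro add_nonneg_nonneg mult_nonneg_nonneg) auto
  have "((d+z+y+x)*((d+z)+d)+d*((d+z)+(d+z+y+x))) * ((d+z+y)+d) = ((d+z+y)*((d+z)+d)+d*((d+z)+(d+z+y))) * ((d+z+y+x)+d) + (2*x*d*d)"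
    by (simp add: algebra_simps)
  then show ?thesis using N by linarith
qed

lemma h5:
  fixes v :: "nat \<Rightarrow> real"
  assumes "v 1 \<ge> v 2" and "v 2 \<ge> v 3" and "v 3 \<ge> v 4" and "v 4 > 0"
  shows "ko_win v 3 1 2 4 \<le> ko_win v 3 2 1 4"
proof -
  define x where "x = v 1 - v 2"
  define y where "y = v 2 - v 3"
  define z where "z = v 3 - v 4"
  define d where "d = v 4"
  have x: "x \<ge> 0" and y: "y \<ge> 0" and z: "z \<ge> 0" and d: "d > 0"
    using assms by (auto simp: x_def y_def z_def d_def)
  have e: "v 1 = d+z+y+x" "v 2 = d+z+y" "v 3 = d+z" "v 4 = d"
    by (auto simp: x_def y_def z_def d_def)
  have pos: "v 1 > 0" "v 2 > 0" "v 3 > 0" "v 4 > 0" using assms by linarith+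
  have kp: "ko_win v 3 2 1 4 = v 3 * v 3 * (v 1 * (v 3 + v 4) + v 4 * (v 3 + v 1)) / (((v 3 + v 1)*(v 3 + v 2)*(v 3 + v 4)) * (v 1 + v 4))"
    unfolding ko_eq[OF pos(3,2,1,4)] by (simp add: mult_ac)
  have kq: "ko_win v 3 1 2 4 = v 3 * v 3 * (v 2 * (v 3 + v 4) + v 4 * (v 3 + v 2)) / (((v 3 + v 1)*(v 3 + v 2)*(v 3 + v 4)) * (v 2 + v 4))"
    unfolding ko_eq[OF pos(3,1,2,4)] by (simp add: mult_ac)
  have "v 3 * v 3 * (v 2 * (v 3 + v 4) + v 4 * (v 3 + v 2)) / (((v 3 + v 1)*(v 3 + v 2)*(v 3 + v 4)) * (v 2 + v 4)) \<le> v 3 * v 3 * (v 1 * (v 3 + v 4) + v 4 * (v 3 + v 1)) / (((v 3 + v 1)*(v 3 + v 2)*(v 3 + v 4)) * (v 1 + v 4))"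
  proof (rule cmp)
    show "(v 2 * (v 3 + v 4) + v 4 * (v 3 + v 2)) * (v 1 + v 4) \<le> (v 1 * (v 3 + v 4) + v 4 * (v 3 + v 1)) * (v 2 + v 4)"
      unfolding e by (rule poly5[OF x y z d])
  qed (use pos in \<open>auto intro!: mult_pos_pos add_pos_pos\<close>)
  then show ?thesis unfolding kp kq .
qed

lemma poly6:
  fixes x y z d :: real
  assumes x: "x \<ge> 0" and y: "y \<ge> 0" and z: "z \<ge> 0" and d: "d > 0"
  shows "((d+z+y+x)*(d+(d+z))+(d+z)*(d+(d+z+y+x))) * ((d+z+y+x)+(d+z+y)) \<le> ((d+z+y+x)*(d+(d+z+y))+(d+z+y)*(d+(d+z+y+x))) * ((d+z+y+x)+(d+z))"
proof -
  have N: "0 \<le> 2*y*d*d + 4*y*z*d + 2*y*z*z + 4*y*y*d + 4*y*y*z + 2*y*y*y + 4*x*y*d + 4*x*y*z + 4*x*y*y + 2*x*x*y"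
    using x y z d by (intro add_nonneg_nonneg mult_nonneg_nonneg) auto
  have "((d+z+y+x)*(d+(d+z+y))+(d+z+y)*(d+(d+z+y+x))) * ((d+z+y+x)+(d+z)) = ((d+z+y+x)*(d+(d+z))+(d+z)*(d+(d+z+y+x))) * ((d+z+y+x)+(d+z+y)) + (2*y*d*d + 4*y*z*d + 2*y*z*z + 4*y*y*d + 4*y*y*z + 2*y*y*y + 4*x*y*d + 4*x*y*z + 4*x*y*y + 2*x*x*y)"
    by (simp add: algebra_simps)
  then show ?thesis using N by linarith
qed

lemma h6:
  fixes v :: "nat \<Rightarrow> real"
  assumes "v 1 \<ge> v 2" and "v 2 \<ge> v 3" and "v 3 \<ge> v 4" and "v 4 > 0"
  shows "ko_win v 4 2 1 3 \<le> ko_win v 4 3 1 2"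
proof -
  define x where "x = v 1 - v 2"
  define y where "y = v 2 - v 3"
  define z where "z = v 3 - v 4"
  define d where "d = v 4"
  have x: "x \<ge> 0" and y: "y \<ge> 0" and z: "z \<ge> 0" and d: "d > 0"
    using assms by (auto simp: x_def y_def z_def d_def)
  have e: "v 1 = d+z+y+x" "v 2 = d+z+y" "v 3 = d+z" "v 4 = d"
    by (auto simp: x_def y_def z_def d_def)
  have pos: "v 1 > 0" "v 2 > 0" "v 3 > 0" "v 4 > 0" using assms by linarith+
  have kp: "ko_win v 4 3 1 2 = v 4 * v 4 * (v 1 * (v 4 + v 2) + v 2 * (v 4 + v 1)) / (((v 4 + v 1)*(v 4 + v 2)*(v 4 + v 3)) * (v 1 + v 2))"
    unfolding ko_eq[OF pos(4,3,1,2)] by (simp add: mult_ac)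
  have kq: "ko_win v 4 2 1 3 = v 4 * v 4 * (v 1 * (v 4 + v 3) + v 3 * (v 4 + v 1)) / (((v 4 + v 1)*(v 4 + v 2)*(v 4 + v 3)) * (v 1 + v 3))"
    unfolding ko_eq[OF pos(4,2,1,3)] by (simp add: mult_ac)
  have "v 4 * v 4 * (v 1 * (v 4 + v 3) + v 3 * (v 4 + v 1)) / (((v 4 + v 1)*(v 4 + v 2)*(v 4 + v 3)) * (v 1 + v 3)) \<le> v 4 * v 4 * (v 1 * (v 4 + v 2) + v 2 * (v 4 + v 1)) / (((v 4 + v 1)*(v 4 + v 2)*(v 4 + v 3)) * (v 1 + v 2))"
  proof (rule cmp)
    show "(v 1 * (v 4 + v 3) + v 3 * (v 4 + v 1)) * (v 1 + v 2) \<le> (v 1 * (v 4 + v 2) + v 2 * (v 4 + v 1)) * (v 1 + v 3)"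
      unfolding e by (rule poly6[OF x y z d])
  qed (use pos in \<open>auto intro!: mult_pos_pos add_pos_pos\<close>)
  then show ?thesis unfolding kp kq .
qed

lemma poly7:
  fixes x y z d :: real
  assumes x: "x \<ge> 0" and y: "y \<ge> 0" and z: "z \<ge> 0" and d: "d > 0"
  shows "((d+z+y)*(d+(d+z))+(d+z)*(d+(d+z+y))) * ((d+z+y+x)+(d+z)) \<le> ((d+z+y+x)*(d+(d+z))+(d+z)*(d+(d+z+y+x))) * ((d+z+y)+(d+z))"
proof -
  have N: "0 \<le> 2*x*d*d + 4*x*z*d + 2*x*z*z"
    using x y z d by (intro add_nonneg_nonneg mult_nonneg_nonneg) auto
  have "((d+z+y+x)*(d+(d+z))+(d+z)*(d+(d+z+y+x))) * ((d+z+y)+(d+z)) = ((d+z+y)*(d+(d+z))+(d+z)*(d+(d+z+y))) * ((d+z+y+x)+(d+z)) + (2*x*d*d + 4*x*z*d + 2*x*z*z)"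
    by (simp add: algebra_simps)
  then show ?thesis using N by linarith
qed

lemma h7:
  fixes v :: "nat \<Rightarrow> real"
  assumes "v 1 \<ge> v 2" and "v 2 \<ge> v 3" and "v 3 \<ge> v 4" and "v 4 > 0"
  shows "ko_win v 4 1 2 3 \<le> ko_win v 4 2 1 3"
proof -
  define x where "x = v 1 - v 2"
  define y where "y = v 2 - v 3"
  define z where "z = v 3 - v 4"
  define d where "d = v 4"
  have x: "x \<ge> 0" and y: "y \<ge> 0" and z: "z \<ge> 0" and d: "d > 0"
    using assms by (auto simp: x_def y_def z_def d_def)
  have e: "v 1 = d+z+y+x" "v 2 = d+z+y" "v 3 = d+z" "v 4 = d"
    by (auto simp: x_def y_def z_def d_def)
  have pos: "v 1 > 0" "v 2 > 0" "v 3 > 0" "v 4 > 0" using assms by linarith+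
  have kp: "ko_win v 4 2 1 3 = v 4 * v 4 * (v 1 * (v 4 + v 3) + v 3 * (v 4 + v 1)) / (((v 4 + v 1)*(v 4 + v 2)*(v 4 + v 3)) * (v 1 + v 3))"
    unfolding ko_eq[OF pos(4,2,1,3)] by (simp add: mult_ac)
  have kq: "ko_win v 4 1 2 3 = v 4 * v 4 * (v 2 * (v 4 + v 3) + v 3 * (v 4 + v 2)) / (((v 4 + v 1)*(v 4 + v 2)*(v 4 + v 3)) * (v 2 + v 3))"
    unfolding ko_eq[OF pos(4,1,2,3)] by (simp add: mult_ac)
  have "v 4 * v 4 * (v 2 * (v 4 + v 3) + v 3 * (v 4 + v 2)) / (((v 4 + v 1)*(v 4 + v 2)*(v 4 + v 3)) * (v 2 + v 3)) \<le> v 4 * v 4 * (v 1 * (v 4 + v 3) + v 3 * (v 4 + v 1)) / (((v 4 + v 1)*(v 4 + v 2)*(v 4 + v 3)) * (v 1 + v 3))"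
  proof (rule cmp)
    show "(v 2 * (v 4 + v 3) + v 3 * (v 4 + v 2)) * (v 1 + v 3) \<le> (v 1 * (v 4 + v 3) + v 3 * (v 4 + v 1)) * (v 2 + v 3)"
      unfolding e by (rule poly7[OF x y z d])
  qed (use pos in \<open>auto intro!: mult_pos_pos add_pos_pos\<close>)
  then show ?thesis unfolding kp kq .
qed

theorem lemma1:
  fixes v :: "nat \<Rightarrow> real"
  assumes "v 1 \<ge> v 2" and "v 2 \<ge> v 3" and "v 3 \<ge> v 4" and "v 4 > 0"
  shows "TA v 1 \<ge> TB v 1 \<and> TB v 1 \<ge> TC v 1 \<and>
         TB v 2 \<ge> TA v 2 \<and> TA v 2 \<ge> TC v 2 \<and>
         TC v 3 \<ge> TA v 3 \<and> TA v 3 \<ge> TB v 3 \<and>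
         TC v 4 \<ge> TB v 4 \<and> TB v 4 \<ge> TA v 4"
  using h0[OF assms] h1[OF assms] h2[OF assms] h3[OF assms]
    h4[OF assms] h5[OF assms] h6[OF assms] h7[OF assms]
  by (simp add: TA_def TB_def TC_def)

end
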